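(* Let $g\colon\mathbb{S}^1\to\mathbb{S}^1$ be an orientation-preserving homeomorphism. If $x,y\in Z_1$, then either $d_Z(\iota_1(x),\iota_1(y))=\sigma(x,y)$, or there exist $w,w'\in\mathbb{S}^1$ with $$d_Z(\iota_1(x),\iota_1(y))=\sigma(x,w)+d_Z(\iota_1(w),\iota_1(w'))+\sigma(w',y)\le\sigma(x,y).$$ The corresponding statement holds for $x,y\in Z_2$ (with $\iota_2$). Moreover, if $x\in Z_1$ and $y\in Z_2$, there exist $w,w'\in\mathbb{S}^1$ with $$d_Z(\iota_1(x),\iota_2(y))=\sigma(x,w)+d_Z(\iota_1(w),\iota_1(w'))+\sigma(g(w'),y).$$
   Context: Let $\mathbb{S}^2\subset\mathbb{R}^3$ be the unit sphere with great-circle distance $\sigma$, $\mathbb{S}^1$ the equator, $Z_1,Z_2$ the open southern and northern hemispheres. For an orientation-preserving homeomorphism $g\colon\mathbb{S}^1\to\mathbb{S}^1$, $Z$ is obtained from $\overline Z_1\sqcup\overline Z_2$ by identifying $z\in\mathbb{S}^1\subset\overline Z_1$ with $g(z)\in\mathbb{S}^1\subset\overline Z_2$, with maps $\iota_i\colon\overline Z_i\to Z$. Define $D(x,y)=\infty$ if one point is in $\iota_1(Z_1)$ and the other in $\iota_2(Z_2)$; $D(\iota_1(a),\iota_1(b))=\min\{\sigma(a,b),\sigma(g(a),g(b))\}$ for $a,b\in\mathbb{S}^1$; otherwise $D(x,y)=\sigma(\iota_i^{-1}(x),\iota_i^{-1}(y))$ for the common $i$. $d_Z(x,y)=\inf\sum_{k=1}^nD(x_k,x_{k+1})$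 over finite chains $x=x_1,\dots,x_{n+1}=y$. *)

theory Defs
  imports "HOL-Analysis.Analysis" "HOL-Library.Extended_Real"
begin

type_synonym pt = "real^3"

definition S2 :: "pt set" where "S2 = {x. norm x = 1}"
definition S1 :: "pt set" where "S1 = {x \<in> S2. x$3 = 0}"
definition Z1 :: "pt set" where "Z1 = {x \<in> S2. x$3 < 0}"
definition Z2 :: "pt set" where "Z2 = {x \<in> S2. x$3 > 0}"
definition cZ1 :: "pt set" where "cZ1 = {x \<in> S2. x$3 \<le> 0}"
definition cZ2 :: "pt set" where "cZ2 = {x \<in> S2. x$3 \<ge> 0}"

definition sigma :: "pt \<Rightarrow> pt \<Rightarrow> real" where "sigma a b = arccos (a \<bullet> b)"

definition eq_param :: "real \<Rightarrow> pt" where "eq_param t = vector [cos t, sin t, 0]"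

definition orientation_preserving :: "(pt \<Rightarrow> pt) \<Rightarrow> bool" where
  "orientation_preserving g \<longleftrightarrow>
     (\<exists>F::real \<Rightarrow> real. continuous_on UNIV F \<and> strict_mono F \<and>
        (\<forall>t. F (t + 2*pi) = F t + 2*pi) \<and> (\<forall>t. g (eq_param t) = eq_param (F t)))"

definition carrier_Z :: "(pt + pt) set" where "carrier_Z = Inl ` cZ1 \<union> Inr ` cZ2"

definition glue_rel :: "(pt \<Rightarrow> pt) \<Rightarrow> ((pt + pt) \<times> (pt + pt)) set" where
  "glue_rel g = {(u, v). u \<in> carrier_Z \<and> v \<in> carrier_Z \<and>
      (u = v \<or> (\<exists>z\<in>S1. (u = Inl z \<and> v = Inr (g z)) \<or> (u = Inr (g z) \<and> v = Inl z)))}"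

definition Zspace :: "(pt \<Rightarrow> pt) \<Rightarrow> (pt + pt) set set" where
  "Zspace g = carrier_Z // glue_rel g"

definition iota1 :: "(pt \<Rightarrow> pt) \<Rightarrow> pt \<Rightarrow> (pt + pt) set" where
  "iota1 g a = glue_rel g `` {Inl a}"
definition iota2 :: "(pt \<Rightarrow> pt) \<Rightarrow> pt \<Rightarrow> (pt + pt) set" where
  "iota2 g b = glue_rel g `` {Inr b}"

definition iota1_inv :: "(pt \<Rightarrow> pt) \<Rightarrow> (pt + pt) set \<Rightarrow> pt" where
  "iota1_inv g x = the_inv_into cZ1 (iota1 g) x"
definition iota2_inv :: "(pt \<Rightarrow> pt) \<Rightarrow> (pt + pt) set \<Rightarrow> pt" where
  "iota2_inv g x = the_inv_into cZ2 (iota2 g) x"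

definition Dz :: "(pt \<Rightarrow> pt) \<Rightarrow> (pt + pt) set \<Rightarrow> (pt + pt) set \<Rightarrow> ereal" where
  "Dz g x y =
    (if (x \<in> iota1 g ` Z1 \<and> y \<in> iota2 g ` Z2) \<or> (x \<in> iota2 g ` Z2 \<and> y \<in> iota1 g ` Z1) then \<infinity>
     else if x \<in> iota1 g ` S1 \<and> y \<in> iota1 g ` S1 then
       ereal (min (sigma (iota1_inv g x) (iota1_inv g y))
                  (sigma (g (iota1_inv g x)) (g (iota1_inv g y))))
     else if x \<in> iota1 g ` cZ1 \<and> y \<in> iota1 g ` cZ1 then
       ereal (sigma (iota1_inv g x) (iota1_inv g y))
     else ereal (sigma (iota2_inv g x) (iota2_inv g y)))"

text \<open>The chain pseudometric: chains x = x_1, ..., x_(n+1) = y with n \<ge> 1,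
  written as x # ps @ [y] with intermediate points ps in Z.\<close>
definition dZ :: "(pt \<Rightarrow> pt) \<Rightarrow> (pt + pt) set \<Rightarrow> (pt + pt) set \<Rightarrow> ereal" where
  "dZ g x y = Inf {sum_list (map2 (Dz g) (x # ps) (ps @ [y])) | ps. set ps \<subseteq> Zspace g}"

end

theory Submission
  imports Defs
begin


lemma S2_inner_bounds: assumes "u \<in> S2" "v \<in> S2" shows "-1 \<le> u \<bullet> v" "u \<bullet> v \<le> 1"
proof -
  have "\<bar>u \<bullet> v\<bar> \<le> norm u * norm v" by (rule Cauchy_Schwarz_ineq2)
  then have "\<bar>u \<bullet> v\<bar> \<le> 1" using assms by (simp add: S2_def)
  then show "-1 \<le> u \<bullet> v" "u \<bullet> v \<le> 1" by auto
qed

lemma sigma_nonneg: "u \<in> S2 \<Longrightarrow> v \<in> S2 \<Longrightarrow> 0 \<le> sigma u v"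
  unfolding sigma_def using S2_inner_bounds arccos_lbound by blast

lemma sigma_le_pi: "u \<in> S2 \<Longrightarrow> v \<in> S2 \<Longrightarrow> sigma u v \<le> pi"
  unfolding sigma_def using S2_inner_bounds arccos_ubound by blast

lemma sigma_refl: "u \<in> S2 \<Longrightarrow> sigma u u = 0"
  unfolding sigma_def S2_def by (simp add: inner_commute dot_square_norm)

lemma sigma_sym: "sigma u v = sigma v u"
  unfolding sigma_def by (simp add: inner_commute)

lemma sigma_triangle:
  assumes u: "u \<in> S2" and v: "v \<in> S2" and w: "w \<in> S2"
  shows "sigma u w \<le> sigma u v + sigma v w"
proof -
  define p where "p = u \<bullet> v"
  define q where "q = v \<bullet> w"
  have pb: "-1 \<le> p" "p \<le> 1" using S2_inner_bounds[OF u v] p_def by auto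
  have qb: "-1 \<le> q" "q \<le> 1" using S2_inner_bounds[OF v w] q_def by auto
  have uw: "-1 \<le> u \<bullet> w" "u \<bullet> w \<le> 1" using S2_inner_bounds[OF u w] by auto
  have nu: "u \<bullet> u = 1" "v \<bullet> v = 1" "w \<bullet> w = 1" using u v w by (simp_all add: S2_def dot_square_norm)
  define a where "a = arccos p"
  define b where "b = arccos q"
  have a0: "0 \<le> a" "a \<le> pi" using pb a_def arccos_lbound arccos_ubound by auto
  have b0: "0 \<le> b" "b \<le> pi" using qb b_def arccos_lbound arccos_ubound by auto
  show ?thesis
  proof (cases "a + b \<le> pi")
    case False
    then show ?thesis using sigma_le_pi[OF u w] unfolding sigma_def a_def b_def p_def q_def by simp
  next
    case True
    have eq: "u \<bullet> w = p * q + (u - p *\<^sub>R v) \<bullet> (w - q *\<^sub>R v)"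
      by (simp add: inner_diff_left inner_diff_right p_def q_def nu inner_commute algebra_simps)
    have n1: "(norm (u - p *\<^sub>R v))^2 = 1 - p^2"
      unfolding power2_norm_eq_inner by (simp add: inner_diff_left inner_diff_right p_def nu inner_commute algebra_simps power2_eq_square)
    have n2: "(norm (w - q *\<^sub>R v))^2 = 1 - q^2"
      unfolding power2_norm_eq_inner by (simp add: inner_diff_left inner_diff_right q_def nu inner_commute algebra_simps power2_eq_square)
    have "norm (u - p *\<^sub>R v) = sqrt (1 - p^2)" using n1 by (metis norm_ge_zero real_sqrt_unique)
    moreover have "norm (w - q *\<^sub>R v) = sqrt (1 - q^2)" using n2 by (metis norm_ge_zero real_sqrt_unique)
    ultimately have cs: "- (sqrt (1 - p^2) * sqrt (1 - q^2)) \<le> (u - p *\<^sub>R v) \<bullet> (w - q *\<^sub>R v)"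
      using Cauchy_Schwarz_ineq2[of "u - p *\<^sub>R v" "w - q *\<^sub>R v"] by (simp add: abs_le_iff)
    have "cos (a + b) = p * q - sqrt (1 - p^2) * sqrt (1 - q^2)"
      by (simp add: cos_add a_def b_def cos_arccos pb qb sin_arccos)
    then have "cos (a + b) \<le> u \<bullet> w" using eq cs by linarith
    then have "arccos (u \<bullet> w) \<le> arccos (cos (a+b))"
      using uw by (intro arccos_le_arccos) (auto intro: order_trans[OF _ cos_le_one] simp: )
    also have "\<dots> = a + b" using True a0 b0 by (simp add: arccos_cos)
    finally show ?thesis unfolding sigma_def a_def b_def p_def q_def .
  qed
qed



definition csum :: "('p \<Rightarrow> 'p \<Rightarrow> ereal) \<Rightarrow> 'p \<Rightarrow> 'p list \<Rightarrow> 'p \<Rightarrow> ereal" where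
  "csum D x ps y = sum_list (map2 D (x # ps) (ps @ [y]))"

definition dgen :: "('p \<Rightarrow> 'p \<Rightarrow> ereal) \<Rightarrow> 'p set \<Rightarrow> 'p \<Rightarrow> 'p \<Rightarrow> ereal" where
  "dgen D Zs x y = Inf {sum_list (map2 D (x # ps) (ps @ [y])) | ps. set ps \<subseteq> Zs}"

lemma csum_Nil[simp]: "csum D x [] y = D x y"
  by (simp add: csum_def)

lemma csum_Cons: "csum D x (p # ps) y = D x p + csum D p ps y"
  by (simp add: csum_def)

lemma csum_snoc: "csum D x (ps @ [r]) y = csum D x ps r + D r y"
proof (induction ps arbitrary: x)
  case Nil then show ?case by (simp add: csum_def)
next
  case (Cons p ps) then show ?case by (simp add: csum_Cons add.assoc)
qed

lemma csum_nonneg: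
  assumes "\<And>p q. p \<in> Zs \<Longrightarrow> q \<in> Zs \<Longrightarrow> 0 \<le> D p q"
  shows "x \<in> Zs \<Longrightarrow> y \<in> Zs \<Longrightarrow> set ps \<subseteq> Zs \<Longrightarrow> 0 \<le> csum D x ps y"
proof (induction ps arbitrary: x)
  case Nil then show ?case using assms by simp
next
  case (Cons p ps) then show ?case using assms by (simp add: csum_Cons)
qed

lemma dgen_INF: "dgen D Zs x y = (INF ps\<in>{ps. set ps \<subseteq> Zs}. csum D x ps y)"
  unfolding dgen_def csum_def by (rule arg_cong[where f=Inf]) auto

lemma dgen_le: "set ps \<subseteq> Zs \<Longrightarrow> dgen D Zs x y \<le> csum D x ps y"
  unfolding dgen_INF by (rule INF_lower) auto

lemma dgen_ge: "(\<And>ps. set ps \<subseteq> Zs \<Longrightarrow> c \<le> csum D x ps y) \<Longrightarrow> c \<le> dgen D Zs x y"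
  unfolding dgen_INF by (rule INF_greatest) auto

locale glue =
  fixes D :: "'p \<Rightarrow> 'p \<Rightarrow> ereal" and Zs :: "'p set" and j j' :: "pt \<Rightarrow> 'p"
    and A A' E :: "pt set" and k :: "pt \<Rightarrow> pt"
  assumes Zcov: "q \<in> Zs \<Longrightarrow> q \<in> j ` A \<or> q \<in> j ` E \<or> q \<in> j' ` A'"
    and jin: "a \<in> A \<union> E \<Longrightarrow> j a \<in> Zs" and j'in: "a \<in> A' \<Longrightarrow> j' a \<in> Zs"
    and jinj: "inj_on j (A \<union> E)" and j'inj: "inj_on j' A'"
    and disj: "a \<in> A \<union> E \<Longrightarrow> b \<in> A' \<Longrightarrow> j a \<noteq> j' b" and AE: "A \<inter> E = {}"
    and Dnn: "p \<in> Zs \<Longrightarrow> q \<in> Zs \<Longrightarrow> 0 \<le> D p q"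
    and Dj1: "a \<in> A \<Longrightarrow> b \<in> A \<union> E \<Longrightarrow> D (j a) (j b) = ereal (sigma a b)"
    and Dj2: "a \<in> A \<Longrightarrow> b \<in> A \<union> E \<Longrightarrow> D (j b) (j a) = ereal (sigma b a)"
    and DjE: "a \<in> E \<Longrightarrow> b \<in> E \<Longrightarrow> D (j a) (j b) \<le> ereal (sigma a b)"
    and Dj'1: "a \<in> A' \<Longrightarrow> b \<in> A' \<union> E \<Longrightarrow> D (j' a) (j' b) = ereal (sigma a b)"
    and Dj'2: "a \<in> A' \<Longrightarrow> b \<in> A' \<union> E \<Longrightarrow> D (j' b) (j' a) = ereal (sigma b a)"
    and Dj'E: "a \<in> E \<Longrightarrow> b \<in> E \<Longrightarrow> D (j' a) (j' b) \<le> ereal (sigma a b)"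
    and jk: "w \<in> E \<Longrightarrow> j' (k w) = j w" and kE: "w \<in> E \<Longrightarrow> k w \<in> E"
    and Dinf1: "a \<in> A \<Longrightarrow> b \<in> A' \<Longrightarrow> D (j a) (j' b) = \<infinity>"
    and Dinf2: "a \<in> A \<Longrightarrow> b \<in> A' \<Longrightarrow> D (j' b) (j a) = \<infinity>"
    and AS2: "A \<subseteq> S2" and A'S2: "A' \<subseteq> S2" and ES2: "E \<subseteq> S2"
    and Ene: "E \<noteq> {}" and Ec: "compact E" and kc: "continuous_on E k"
begin

abbreviation "d \<equiv> dgen D Zs"

lemma d_nonneg: "p \<in> Zs \<Longrightarrow> q \<in> Zs \<Longrightarrow> 0 \<le> d p q"
  by (rule dgen_ge) (rule csum_nonneg[OF Dnn])

lemma d_le_D: "d p q \<le> D p q"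
  using dgen_le[of "[]" Zs D p q] by simp

lemma d_right: assumes "p \<in> Zs" "q \<in> Zs" "r \<in> Zs" shows "d p q \<le> d p r + D r q"
proof -
  have nm: "D r q \<noteq> -\<infinity>" using Dnn[of r q] assms by auto
  have cn: "\<And>ps. set ps \<subseteq> Zs \<Longrightarrow> 0 \<le> csum D p ps r" using csum_nonneg[of Zs D] Dnn assms by blast
  have "d p r + D r q = (INF ps\<in>{ps. set ps \<subseteq> Zs}. csum D p ps r + D r q)"
    unfolding dgen_INF
    by (rule INF_ereal_add_left[symmetric]) (use nm cn in \<open>auto intro: exI[of _ "[]"]\<close>)
  also have "d p q \<le> \<dots>"
    by (rule INF_greatest) (use assms in \<open>auto simp: csum_snoc[symmetric] intro!: dgen_le\<close>)
  finally show ?thesis .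
qed


lemma d_left: assumes "p \<in> Zs" "q \<in> Zs" "r \<in> Zs" shows "d p q \<le> D p r + d r q"
proof -
  have nm: "D p r \<noteq> -\<infinity>" using Dnn[of p r] assms by auto
  have cn: "\<And>ps. set ps \<subseteq> Zs \<Longrightarrow> 0 \<le> csum D r ps q" using csum_nonneg[of Zs D] Dnn assms by blast
  have "D p r + d r q = (INF ps\<in>{ps. set ps \<subseteq> Zs}. D p r + csum D r ps q)"
    unfolding dgen_INF
    by (rule INF_ereal_add_right[symmetric]) (use nm cn in \<open>auto intro: exI[of _ "[]"]\<close>)
  also have "d p q \<le> \<dots>"
    by (rule INF_greatest) (use assms in \<open>auto simp: csum_Cons[symmetric] intro!: dgen_le\<close>)
  finally show ?thesis .
qed

lemma jinA: "a \<in> A \<Longrightarrow> j a \<in> Zs" and jinE: "a \<in> E \<Longrightarrow> j a \<in> Zs"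
  using jin by auto

lemma sigma_tri_e: "a \<in> S2 \<Longrightarrow> b \<in> S2 \<Longrightarrow> c \<in> S2 \<Longrightarrow> ereal (sigma a c) \<le> ereal (sigma a b) + ereal (sigma b c)"
  using sigma_triangle by simp

lemma dd0: "w \<in> E \<Longrightarrow> d (j w) (j w) = 0"
proof -
  assume w: "w \<in> E"
  have "d (j w) (j w) \<le> ereal (sigma w w)" using d_le_D DjE[OF w w] order_trans by blast
  moreover have "sigma w w = 0" using sigma_refl w ES2 by blast
  ultimately have "d (j w) (j w) \<le> 0" by (simp add: zero_ereal_def)
  then show ?thesis using d_nonneg[OF jinE[OF w] jinE[OF w]] by simp
qed

definition Inv :: "pt \<Rightarrow> ereal \<Rightarrow> 'p \<Rightarrow> bool" where
  "Inv x s q \<longleftrightarrow>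
    (\<exists>a\<in>A. q = j a \<and> ereal (sigma x a) \<le> s) \<or>
    (\<exists>w\<in>E. \<exists>w'\<in>E. q = j w' \<and> ereal (sigma x w) + d (j w) (j w') \<le> s) \<or>
    (\<exists>a\<in>A. \<exists>w\<in>E. \<exists>w'\<in>E. q = j a \<and> ereal (sigma x w) + d (j w) (j w') + ereal (sigma w' a) \<le> s) \<or>
    (\<exists>a\<in>A'. \<exists>w\<in>E. \<exists>w'\<in>E. q = j' a \<and> ereal (sigma x w) + d (j w) (j w') + ereal (sigma (k w') a) \<le> s)"

lemma Inv_inf: "q \<in> Zs \<Longrightarrow> Inv x \<infinity> q"
proof -
  assume q: "q \<in> Zs"
  obtain e where e: "e \<in> E" using Ene by auto
  from Zcov[OF q] show ?thesis
    unfolding Inv_def using e by (elim disjE) fastforce+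
qed


definition dr :: "pt \<Rightarrow> pt \<Rightarrow> real" where "dr w w' = real_of_ereal (d (j w) (j w'))"

lemma d_fin: assumes "w \<in> E" "w' \<in> E" shows "d (j w) (j w') = ereal (dr w w')" "0 \<le> dr w w'"
    "dr w w' \<le> sigma w w'"
proof -
  have u: "d (j w) (j w') \<le> ereal (sigma w w')" using d_le_D DjE[OF assms] order_trans by blast
  have l: "0 \<le> d (j w) (j w')" using d_nonneg jinE assms by auto
  show e: "d (j w) (j w') = ereal (dr w w')" unfolding dr_def using u l by (cases "d (j w) (j w')") auto
  show "0 \<le> dr w w'" using l e by simp
  show "dr w w' \<le> sigma w w'" using u e by simp
qed

lemma dr_tri: assumes "w \<in> E" "w' \<in> E" "u \<in> E" shows "dr w u \<le> dr w w' + sigma w' u"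
proof -
  have "d (j w) (j u) \<le> d (j w) (j w') + D (j w') (j u)" using d_right jinE assms by blast
  also have "\<dots> \<le> d (j w) (j w') + ereal (sigma w' u)" using DjE assms add_left_mono by blast
  finally show ?thesis using d_fin assms by simp
qed

lemma dr_tri2: assumes "w \<in> E" "w' \<in> E" "u \<in> E" shows "dr w u \<le> dr w w' + sigma (k w') (k u)"
proof -
  have "d (j w) (j u) \<le> d (j w) (j w') + D (j w') (j u)" using d_right jinE assms by blast
  also have "D (j w') (j u) = D (j' (k w')) (j' (k u))" using jk assms by simp
  also have "d (j w) (j w') + \<dots> \<le> d (j w) (j w') + ereal (sigma (k w') (k u))" using Dj'E kE assms add_left_mono by blast
  finally show ?thesis using d_fin assms by simp
qed

lemma dr_tri_left: assumes "w \<in> E" "w' \<in> E" "u \<in> E" shows "dr w w' \<le> sigma w u + dr u w'"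
proof -
  have "d (j w) (j w') \<le> D (j w) (j u) + d (j u) (j w')" using d_left jinE assms by blast
  also have "\<dots> \<le> ereal (sigma w u) + d (j u) (j w')" using DjE assms add_right_mono by blast
  finally show ?thesis using d_fin assms by simp
qed

lemma helper: "X \<le> Y + Z \<Longrightarrow> Y \<le> s \<Longrightarrow> X \<le> s + (Z::ereal)"
  by (meson add_right_mono order_trans)

lemma Inv_step:
  assumes x: "x \<in> A" and I: "Inv x s r" and r: "r \<in> Zs" and q: "q \<in> Zs" and s0: "0 \<le> s"
  shows "Inv x (s + D r q) q"
proof (cases "D r q = \<infinity>")
  case True
  then have eq: "s + D r q = \<infinity>" using s0 by auto
  show ?thesis unfolding eq using Inv_inf q by blast
next
  case fin: False
  have xS: "x \<in> S2" using x AS2 by auto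
  have S[simp]: "a \<in> A \<Longrightarrow> a \<in> S2" "a \<in> A' \<Longrightarrow> a \<in> S2" "a \<in> E \<Longrightarrow> a \<in> S2" for a
    using AS2 A'S2 ES2 by auto
  from Zcov[OF q] consider (qa) a2 where "a2\<in>A" "q = j a2" | (qe) u where "u\<in>E" "q = j u"
    | (qd) b2 where "b2\<in>A'" "q = j' b2" by blast
  note qc = this
  from I consider (a) a1 where "a1\<in>A" "r = j a1" "ereal (sigma x a1) \<le> s"
    | (b) w w' where "w\<in>E" "w'\<in>E" "r = j w'" "ereal (sigma x w) + d (j w) (j w') \<le> s"
    | (c) a1 w w' where "a1\<in>A" "w\<in>E" "w'\<in>E" "r = j a1"
         "ereal (sigma x w) + d (j w) (j w') + ereal (sigma w' a1) \<le> s"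
    | (d) b1 w w' where "b1\<in>A'" "w\<in>E" "w'\<in>E" "r = j' b1"
         "ereal (sigma x w) + d (j w) (j w') + ereal (sigma (k w') b1) \<le> s"
    unfolding Inv_def by blast
  then show ?thesis
  proof cases
    case a
    show ?thesis using qc
    proof cases
      case qa
      have "D r q = ereal (sigma a1 a2)" using Dj1 a qa by auto
      moreover have "sigma x a2 \<le> sigma x a1 + sigma a1 a2" using sigma_triangle a qa xS by auto
      ultimately have "ereal (sigma x a2) \<le> s + D r q" using helper[OF _ a(3)] by simp
      then show ?thesis unfolding Inv_def using qa by blast
    next
      case qe
      have "D r q = ereal (sigma a1 u)" using Dj1 a qe by auto
      moreover have "sigma x u \<le> sigma x a1 + sigma a1 u" using sigma_triangle a qe xS by auto
      ultimately have "ereal (sigma x u) + d (j u) (j u) \<le> s + D r q" using helper[OF _ a(3)] qe dd0 by simp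
      then show ?thesis unfolding Inv_def using qe by blast
    next
      case qd
      then show ?thesis using fin Dinf1 a by auto
    qed
  next
    case b
    show ?thesis using qc
    proof cases
      case qa
      have "D r q = ereal (sigma w' a2)" using Dj2 b qa by auto
      then have "ereal (sigma x w) + d (j w) (j w') + ereal (sigma w' a2) \<le> s + D r q"
        using helper[OF _ b(4)] by simp
      then show ?thesis unfolding Inv_def using qa b by blast
    next
      case qe
      have "D r q = ereal (sigma w' u)" if "False" using that by simp
      have "ereal (sigma x w) + d (j w) (j u) \<le> (ereal (sigma x w) + d (j w) (j w')) + D r q"
      proof -
        have "d (j w) (j u) \<le> d (j w) (j w') + D (j w') (j u)" using d_right jinE b qe by blast
        then show ?thesis using b qe by (simp add: add.assoc add_left_mono)
      qed
      then have "ereal (sigma x w) + d (j w) (j u) \<le> s + D r q" using helper[OF _ b(4)] by simp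
      then show ?thesis unfolding Inv_def using qe b by blast
    next
      case qd
      have "D r q = D (j' (k w')) (j' b2)" using jk b qd by simp
      also have "\<dots> = ereal (sigma (k w') b2)" using Dj'2 kE b qd by auto
      finally have "ereal (sigma x w) + d (j w) (j w') + ereal (sigma (k w') b2) \<le> s + D r q"
        using helper[OF _ b(4)] by simp
      then show ?thesis unfolding Inv_def using qd b by blast
    qed
  next
    case c
    have dv: "d (j w) (j w') = ereal (dr w w')" using d_fin c by auto
    show ?thesis using qc
    proof cases
      case qa
      have "D r q = ereal (sigma a1 a2)" using Dj1 c qa by auto
      moreover have "sigma w' a2 \<le> sigma w' a1 + sigma a1 a2" using sigma_triangle c qa by auto
      ultimately have "ereal (sigma x w) + d (j w) (j w') + ereal (sigma w' a2) \<le> s + D r q"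
        using helper[OF _ c(5)] dv by simp
      then show ?thesis unfolding Inv_def using qa c by blast
    next
      case qe
      have "D r q = ereal (sigma a1 u)" using Dj1 c qe by auto
      moreover have "sigma w' u \<le> sigma w' a1 + sigma a1 u" using sigma_triangle c qe by auto
      moreover have "dr w u \<le> dr w w' + sigma w' u" using dr_tri c qe by auto
      moreover have "d (j w) (j u) = ereal (dr w u)" using d_fin c qe by auto
      ultimately have "ereal (sigma x w) + d (j w) (j u) \<le> s + D r q"
        using helper[OF _ c(5)] dv by simp
      then show ?thesis unfolding Inv_def using qe c by blast
    next
      case qd
      then show ?thesis using fin Dinf1 c by auto
    qed
  next
    case d
    have dv: "d (j w) (j w') = ereal (dr w w')" using d_fin d by auto
    show ?thesis using qc
    proof cases
      case qa
      then show ?thesis using fin Dinf2 d by auto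
    next
      case qe
      have "D r q = D (j' b1) (j' (k u))" using jk d qe by simp
      also have "\<dots> = ereal (sigma b1 (k u))" using Dj'1 kE d qe by auto
      finally have "D r q = ereal (sigma b1 (k u))" .
      moreover have "sigma (k w') (k u) \<le> sigma (k w') b1 + sigma b1 (k u)"
        using sigma_triangle d qe kE by auto
      moreover have "dr w u \<le> dr w w' + sigma (k w') (k u)" using dr_tri2 d qe by auto
      moreover have "d (j w) (j u) = ereal (dr w u)" using d_fin d qe by auto
      ultimately have "ereal (sigma x w) + d (j w) (j u) \<le> s + D r q"
        using helper[OF _ d(5)] dv by simp
      then show ?thesis unfolding Inv_def using qe d by blast
    next
      case qd
      have "D r q = ereal (sigma b1 b2)" using Dj'1 d qd by auto
      moreover have "sigma (k w') b2 \<le> sigma (k w') b1 + sigma b1 b2" using sigma_triangle d qd kE by auto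
      ultimately have "ereal (sigma x w) + d (j w) (j w') + ereal (sigma (k w') b2) \<le> s + D r q"
        using helper[OF _ d(5)] dv by simp
      then show ?thesis unfolding Inv_def using qd d by blast
    qed
  qed
qed


lemma Inv_chain: "x \<in> A \<Longrightarrow> set ps \<subseteq> Zs \<Longrightarrow> q \<in> Zs \<Longrightarrow> Inv x (csum D (j x) ps q) q"
proof (induction ps arbitrary: q rule: rev_induct)
  case Nil
  have "sigma x x = 0" using Nil(1) sigma_refl AS2 by blast
  then have "Inv x 0 (j x)" unfolding Inv_def using Nil(1) by (intro disjI1 bexI[of _ x]) (auto simp: zero_ereal_def)
  from Inv_step[OF Nil(1) this jinA[OF Nil(1)] Nil(3)] show ?case by simp
next
  case (snoc r ps)
  have r: "r \<in> Zs" using snoc by auto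
  have I: "Inv x (csum D (j x) ps r) r" using snoc r by auto
  have "0 \<le> csum D (j x) ps r" using csum_nonneg[of Zs D] Dnn snoc jinA r by auto
  from Inv_step[OF snoc(2) I r snoc(4) this] show ?case by (simp add: csum_snoc)
qed

lemma sigma_cont:
  assumes "continuous_on S f" "continuous_on S g" "\<And>p. p \<in> S \<Longrightarrow> f p \<in> S2" "\<And>p. p \<in> S \<Longrightarrow> g p \<in> S2"
  shows "continuous_on S (\<lambda>p. sigma (f p) (g p))"
  unfolding sigma_def
  by (rule continuous_on_arccos) (use assms S2_inner_bounds in \<open>auto intro!: continuous_intros\<close>)

lemma dr_cont: "continuous_on (E \<times> E) (\<lambda>p. dr (fst p) (snd p))"
  unfolding continuous_on_iff
proof (intro ballI allI impI)
  fix p :: "pt \<times> pt" and e :: real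
  assume p: "p \<in> E \<times> E" and e: "0 < e"
  define H where "H p' = sigma (fst p) (fst p') + sigma (snd p') (snd p)" for p' :: "pt \<times> pt"
  have "continuous_on (E \<times> E) H" unfolding H_def
    by (intro continuous_on_add sigma_cont) (use p ES2 in \<open>auto intro!: continuous_intros\<close>)
  then obtain \<delta> where \<delta>: "\<delta> > 0" "\<And>p'. p' \<in> E \<times> E \<Longrightarrow> dist p' p < \<delta> \<Longrightarrow> dist (H p') (H p) < e"
    using p e unfolding continuous_on_iff by metis
  have "fst p \<in> S2" "snd p \<in> S2" using p ES2 by auto
  then have Hp: "H p = 0" using sigma_refl unfolding H_def by simp
  show "\<exists>\<delta>>0. \<forall>p'\<in>E \<times> E. dist p' p < \<delta> \<longrightarrow> dist (dr (fst p') (snd p')) (dr (fst p) (snd p)) < e"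
  proof (intro exI[of _ \<delta>] conjI[OF \<delta>(1)] ballI impI)
    fix p' assume p': "p' \<in> E \<times> E" "dist p' p < \<delta>"
    have "H p' < e" using \<delta>(2)[OF p'] Hp by (simp add: dist_real_def)
    moreover have "dr (fst p) (snd p) \<le> H p' + dr (fst p') (snd p')"
      using dr_tri_left[of "fst p" "snd p" "fst p'"] dr_tri[of "fst p'" "snd p'" "snd p"] p p'
      unfolding H_def by auto
    moreover have "dr (fst p') (snd p') \<le> H p' + dr (fst p) (snd p)"
      using dr_tri_left[of "fst p'" "snd p'" "fst p"] dr_tri[of "fst p" "snd p" "snd p'"] p p'
        sigma_sym[of "fst p" "fst p'"] sigma_sym[of "snd p" "snd p'"]
      unfolding H_def by auto
    ultimately show "dist (dr (fst p') (snd p')) (dr (fst p) (snd p)) < e"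
      by (simp add: dist_real_def abs_less_iff)
  qed
qed

theorem T1:
  assumes x: "x \<in> A" and y: "y \<in> A"
  shows "d (j x) (j y) = ereal (sigma x y) \<or>
    (\<exists>w\<in>E. \<exists>w'\<in>E. d (j x) (j y) = ereal (sigma x w) + d (j w) (j w') + ereal (sigma w' y) \<and>
       ereal (sigma x w) + d (j w) (j w') + ereal (sigma w' y) \<le> ereal (sigma x y))"
proof -
  define F where "F p = sigma x (fst p) + dr (fst p) (snd p) + sigma (snd p) y" for p
  have Fc: "continuous_on (E \<times> E) F" unfolding F_def
    by (intro continuous_on_add sigma_cont dr_cont) (use x y AS2 ES2 in \<open>auto intro!: continuous_intros\<close>)
  obtain p0 where p0: "p0 \<in> E \<times> E" "\<And>p. p \<in> E \<times> E \<Longrightarrow> F p0 \<le> F p"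
    using continuous_attains_inf[OF compact_Times[OF Ec Ec] _ Fc] Ene by blast
  obtain w0 w0' where p0e: "p0 = (w0, w0')" by (cases p0)
  have Fe: "ereal (sigma x w) + d (j w) (j w') + ereal (sigma w' y) = ereal (F (w, w'))"
    if "w \<in> E" "w' \<in> E" for w w' using that by (simp add: F_def d_fin)
  have up1: "d (j x) (j y) \<le> ereal (sigma x y)" using d_le_D Dj1 x y by (metis Un_iff)
  have up2: "d (j x) (j y) \<le> ereal (F (w, w'))" if w: "w \<in> E" "w' \<in> E" for w w'
  proof -
    have "d (j x) (j y) \<le> D (j x) (j w) + d (j w) (j y)" using d_left x y w jinA jinE by blast
    also have "\<dots> \<le> D (j x) (j w) + (d (j w) (j w') + D (j w') (j y))"
      using d_right x y w jinA jinE add_left_mono by blast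
    also have "\<dots> = ereal (sigma x w) + d (j w) (j w') + ereal (sigma w' y)"
      using Dj1 Dj2 x y w by (simp add: add.assoc)
    finally show ?thesis using Fe w by simp
  qed
  have lo: "min (ereal (sigma x y)) (ereal (F p0)) \<le> d (j x) (j y)"
  proof (rule dgen_ge)
    fix ps assume ps: "set ps \<subseteq> Zs"
    have I: "Inv x (csum D (j x) ps (j y)) (j y)" using Inv_chain x ps jinA y by blast
    have ij: "a \<in> A \<union> E \<Longrightarrow> j a = j y \<Longrightarrow> a = y" for a using jinj y inj_on_eq_iff by fastforce
    from I show "min (ereal (sigma x y)) (ereal (F p0)) \<le> csum D (j x) ps (j y)"
      unfolding Inv_def
    proof (elim disjE bexE conjE)
      fix a assume "a \<in> A" "j y = j a" "ereal (sigma x a) \<le> csum D (j x) ps (j y)"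
      then show ?thesis using ij[of a] by (auto simp: min_le_iff_disj)
    next
      fix w w' assume "w' \<in> E" "j y = j w'"
      then show ?thesis using ij[of w'] AE y by auto
    next
      fix a w w' assume h: "a \<in> A" "w \<in> E" "w' \<in> E" "j y = j a"
        "ereal (sigma x w) + d (j w) (j w') + ereal (sigma w' a) \<le> csum D (j x) ps (j y)"
      then have "a = y" using ij by auto
      then have "ereal (F (w, w')) \<le> csum D (j x) ps (j y)" using h Fe by simp
      moreover have "F p0 \<le> F (w, w')" using p0 h by auto
      ultimately have "ereal (F p0) \<le> csum D (j x) ps (j y)" by (meson ereal_less_eq(3) order_trans)
      then show ?thesis by (auto simp: min_le_iff_disj)
    next
      fix a assume "a \<in> A'" "j y = j' a"
      then show ?thesis using disj[of y a] y by auto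
    qed
  qed
  show ?thesis
  proof (cases "sigma x y \<le> F p0")
    case True
    then show ?thesis using lo up1 by (auto simp: min_def)
  next
    case False
    have "d (j x) (j y) = ereal (F p0)" using lo up2[of w0 w0'] p0 p0e False by (auto simp: min_def)
    then show ?thesis using Fe[of w0 w0'] p0 p0e False by (intro disjI2 bexI[of _ w0] bexI[of _ w0']) auto
  qed
qed

theorem T2:
  assumes x: "x \<in> A" and y: "y \<in> A'"
  shows "\<exists>w\<in>E. \<exists>w'\<in>E. d (j x) (j' y) = ereal (sigma x w) + d (j w) (j w') + ereal (sigma (k w') y)"
proof -
  define F where "F p = sigma x (fst p) + dr (fst p) (snd p) + sigma (k (snd p)) y" for p
  have kc2: "continuous_on (E \<times> E) (\<lambda>p. k (snd p))"
    by (rule continuous_on_compose2[OF kc]) (auto intro: continuous_intros)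
  have Fc: "continuous_on (E \<times> E) F" unfolding F_def
    by (intro continuous_on_add sigma_cont dr_cont kc2) (use x y AS2 A'S2 ES2 kE in \<open>auto intro!: continuous_intros\<close>)
  obtain p0 where p0: "p0 \<in> E \<times> E" "\<And>p. p \<in> E \<times> E \<Longrightarrow> F p0 \<le> F p"
    using continuous_attains_inf[OF compact_Times[OF Ec Ec] _ Fc] Ene by blast
  obtain w0 w0' where p0e: "p0 = (w0, w0')" by (cases p0)
  have Fe: "ereal (sigma x w) + d (j w) (j w') + ereal (sigma (k w') y) = ereal (F (w, w'))"
    if "w \<in> E" "w' \<in> E" for w w' using that by (simp add: F_def d_fin)
  have yZ: "j' y \<in> Zs" using j'in y by auto
  have up2: "d (j x) (j' y) \<le> ereal (F (w, w'))" if w: "w \<in> E" "w' \<in> E" for w w'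
  proof -
    have "d (j x) (j' y) \<le> D (j x) (j w) + d (j w) (j' y)" using d_left x yZ w jinA jinE by blast
    also have "\<dots> \<le> D (j x) (j w) + (d (j w) (j w') + D (j w') (j' y))"
      using d_right yZ w jinA jinE add_left_mono by blast
    also have "D (j w') (j' y) = D (j' (k w')) (j' y)" using jk w by simp
    also have "\<dots> = ereal (sigma (k w') y)" using Dj'2 y kE w by auto
    also have "D (j x) (j w) + (d (j w) (j w') + ereal (sigma (k w') y)) = ereal (sigma x w) + d (j w) (j w') + ereal (sigma (k w') y)"
      using Dj1 x w by (simp add: add.assoc)
    finally show ?thesis using Fe w by simp
  qed
  have lo: "ereal (F p0) \<le> d (j x) (j' y)"
  proof (rule dgen_ge)
    fix ps assume ps: "set ps \<subseteq> Zs"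
    have I: "Inv x (csum D (j x) ps (j' y)) (j' y)" using Inv_chain x ps yZ by blast
    from I show "ereal (F p0) \<le> csum D (j x) ps (j' y)"
      unfolding Inv_def
    proof (elim disjE bexE conjE)
      fix a assume "a \<in> A" "j' y = j a" then show ?thesis using disj[of a y] y by auto
    next
      fix w w' assume "w' \<in> E" "j' y = j w'" then show ?thesis using disj[of w' y] y by auto
    next
      fix a w w' assume "a \<in> A" "j' y = j a" then show ?thesis using disj[of a y] y by auto
    next
      fix a w w' assume h: "a \<in> A'" "w \<in> E" "w' \<in> E" "j' y = j' a"
        "ereal (sigma x w) + d (j w) (j w') + ereal (sigma (k w') a) \<le> csum D (j x) ps (j' y)"
      then have "a = y" using j'inj y inj_on_eq_iff by fastforce
      then have "ereal (F (w, w')) \<le> csum D (j x) ps (j' y)" using h Fe by simp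
      moreover have "F p0 \<le> F (w, w')" using p0 h by auto
      ultimately show ?thesis by (meson ereal_less_eq(3) order_trans)
    qed
  qed
  have "d (j x) (j' y) = ereal (F p0)" using lo up2[of w0 w0'] p0 p0e by auto
  then show ?thesis using Fe[of w0 w0'] p0 p0e by (intro bexI[of _ w0] bexI[of _ w0']) auto
qed

end


lemma sets_basic:
  "S1 \<subseteq> S2" "Z1 \<subseteq> S2" "Z2 \<subseteq> S2" "cZ1 = Z1 \<union> S1" "cZ2 = Z2 \<union> S1"
  "Z1 \<inter> S1 = {}" "Z2 \<inter> S1 = {}" "Z1 \<inter> Z2 = {}"
  unfolding S1_def Z1_def Z2_def cZ1_def cZ2_def by auto

lemma S1_ne: "S1 \<noteq> {}"
proof -
  have "vector [1, 0, 0] \<in> S1"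
    unfolding S1_def S2_def by (simp add: norm_eq_sqrt_inner inner_vec_def sum_3 vector_3)
  then show ?thesis by auto
qed

lemma S1_compact: "compact S1"
proof -
  have "S1 = sphere 0 1 \<inter> {x::pt. x $ 3 = 0}" unfolding S1_def S2_def by auto
  moreover have "closed {x::pt. x $ 3 = 0}"
    by (intro closed_Collect_eq continuous_intros)
  ultimately show ?thesis using compact_Int_closed[OF compact_sphere] by metis
qed

locale hom =
  fixes g h :: "pt \<Rightarrow> pt"
  assumes hom: "homeomorphism S1 S1 g h"
begin

lemma gS: "w \<in> S1 \<Longrightarrow> g w \<in> S1" and hS: "w \<in> S1 \<Longrightarrow> h w \<in> S1"
  and hg: "w \<in> S1 \<Longrightarrow> h (g w) = w" and gh: "w \<in> S1 \<Longrightarrow> g (h w) = w"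
  and gc: "continuous_on S1 g" and hc: "continuous_on S1 h"
  using hom unfolding homeomorphism_def by auto

lemma rel_LL: "(Inl a, Inl c) \<in> glue_rel g \<Longrightarrow> c = a"
  unfolding glue_rel_def by auto
lemma rel_RR: "(Inr a, Inr c) \<in> glue_rel g \<Longrightarrow> c = a"
  unfolding glue_rel_def by auto
lemma rel_LR: "(Inl a, Inr c) \<in> glue_rel g \<Longrightarrow> a \<in> S1 \<and> c = g a"
  unfolding glue_rel_def by auto
lemma rel_RL: "(Inr a, Inl c) \<in> glue_rel g \<Longrightarrow> c \<in> S1 \<and> a = g c"
  unfolding glue_rel_def by auto

lemma iota1_Z1: "a \<in> Z1 \<Longrightarrow> iota1 g a = {Inl a}"
  unfolding iota1_def using sets_basic
  by (auto simp: glue_rel_def carrier_Z_def)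

lemma iota2_Z2: "a \<in> Z2 \<Longrightarrow> iota2 g a = {Inr a}"
  unfolding iota2_def using sets_basic gS
  by (auto simp: glue_rel_def carrier_Z_def)

lemma iota1_S1: "w \<in> S1 \<Longrightarrow> iota1 g w = {Inl w, Inr (g w)}"
  unfolding iota1_def using sets_basic gS
  by (auto simp: glue_rel_def carrier_Z_def)

lemma iota2_S1: "w \<in> S1 \<Longrightarrow> iota2 g w = {Inl (h w), Inr w}"
  unfolding iota2_def using sets_basic gS hS gh hg
  by (auto simp: glue_rel_def carrier_Z_def)


lemma iota2_S1_eq: "w \<in> S1 \<Longrightarrow> iota2 g w = iota1 g (h w)"
  using iota2_S1 iota1_S1 hS gh by auto

lemma iota1_S1_eq: "w \<in> S1 \<Longrightarrow> iota1 g w = iota2 g (g w)"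
  using iota2_S1_eq gS hg by auto

lemma Inl_in1: "a \<in> cZ1 \<Longrightarrow> Inl c \<in> iota1 g a \<longleftrightarrow> c = a"
  using sets_basic by (cases "a \<in> Z1") (auto simp: iota1_Z1 iota1_S1)

lemma Inr_in2: "a \<in> cZ2 \<Longrightarrow> Inr c \<in> iota2 g a \<longleftrightarrow> c = a"
  using sets_basic by (cases "a \<in> Z2") (auto simp: iota2_Z2 iota2_S1)

lemma inj1: "inj_on (iota1 g) cZ1"
  by (rule inj_onI) (metis Inl_in1)

lemma inj2: "inj_on (iota2 g) cZ2"
  by (rule inj_onI) (metis Inr_in2)

lemma inv1: "a \<in> cZ1 \<Longrightarrow> iota1_inv g (iota1 g a) = a"
  unfolding iota1_inv_def by (rule the_inv_into_f_f[OF inj1])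

lemma inv2: "a \<in> cZ2 \<Longrightarrow> iota2_inv g (iota2 g a) = a"
  unfolding iota2_inv_def by (rule the_inv_into_f_f[OF inj2])

lemma d1: "a \<in> cZ1 \<Longrightarrow> b \<in> Z2 \<Longrightarrow> iota1 g a \<noteq> iota2 g b"
  using iota2_Z2 Inl_in1 by blast

lemma d2: "a \<in> Z1 \<Longrightarrow> b \<in> cZ2 \<Longrightarrow> iota1 g a \<noteq> iota2 g b"
  using iota1_Z1 Inr_in2 by blast

lemma Zspace_eq: "Zspace g = iota1 g ` cZ1 \<union> iota2 g ` cZ2"
  unfolding Zspace_def quotient_def carrier_Z_def iota1_def iota2_def by auto

lemma M1: "a \<in> cZ1 \<Longrightarrow> iota1 g a \<notin> iota2 g ` Z2" using d1 by blast
lemma M2: "a \<in> cZ1 \<Longrightarrow> iota1 g a \<in> iota1 g ` S1 \<longleftrightarrow> a \<in> S1"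
  using inj1 sets_basic by (auto simp: inj_on_eq_iff)
lemma M3: "a \<in> cZ1 \<Longrightarrow> iota1 g a \<in> iota1 g ` Z1 \<longleftrightarrow> a \<in> Z1"
  using inj_onD[OF inj1, of a] sets_basic by blast
lemma M4: "b \<in> cZ2 \<Longrightarrow> iota2 g b \<in> iota2 g ` Z2 \<longleftrightarrow> b \<in> Z2"
  using inj_onD[OF inj2, of b] sets_basic by blast
lemma M5: "b \<in> Z2 \<Longrightarrow> iota2 g b \<notin> iota1 g ` cZ1" using d1 by blast
lemma M6: "b \<in> cZ2 \<Longrightarrow> iota2 g b \<notin> iota1 g ` Z1" using d2 by blast
lemma M7: "a \<in> cZ1 \<Longrightarrow> iota1 g a \<in> iota1 g ` cZ1" by blast

lemma L1: "a \<in> cZ1 \<Longrightarrow> b \<in> cZ1 \<Longrightarrow> \<not> (a \<in> S1 \<and> b \<in> S1) \<Longrightarrow>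
    Dz g (iota1 g a) (iota1 g b) = ereal (sigma a b)"
  unfolding Dz_def using M1[of a] M1[of b] M2[of a] M2[of b] M7[of a] M7[of b] inv1[of a] inv1[of b]
  by auto

lemma L2: "a \<in> S1 \<Longrightarrow> b \<in> S1 \<Longrightarrow>
    Dz g (iota1 g a) (iota1 g b) = ereal (min (sigma a b) (sigma (g a) (g b)))"
proof -
  assume a: "a \<in> S1" and b: "b \<in> S1"
  then have "a \<in> cZ1" "b \<in> cZ1" using sets_basic by auto
  then show ?thesis
    unfolding Dz_def using M1[of a] M1[of b] M2[of a] M2[of b] inv1[of a] inv1[of b] a b
    by auto
qed

lemma L3: "a \<in> cZ2 \<Longrightarrow> b \<in> cZ2 \<Longrightarrow> \<not> (a \<in> S1 \<and> b \<in> S1) \<Longrightarrow>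
    Dz g (iota2 g a) (iota2 g b) = ereal (sigma a b)"
proof -
  assume a: "a \<in> cZ2" and b: "b \<in> cZ2" and n: "\<not> (a \<in> S1 \<and> b \<in> S1)"
  have "a \<in> Z2 \<or> b \<in> Z2" using n a b sets_basic by auto
  then have "iota2 g a \<notin> iota1 g ` cZ1 \<or> iota2 g b \<notin> iota1 g ` cZ1" using M5 by blast
  then have "iota2 g a \<notin> iota1 g ` S1 \<or> iota2 g b \<notin> iota1 g ` S1" using sets_basic by blast
  then show ?thesis
    unfolding Dz_def using M6[OF a] M6[OF b] \<open>iota2 g a \<notin> iota1 g ` cZ1 \<or> iota2 g b \<notin> iota1 g ` cZ1\<close>
      inv2[OF a] inv2[OF b] by auto
qed

lemma L4: "a \<in> Z1 \<Longrightarrow> b \<in> Z2 \<Longrightarrow> Dz g (iota1 g a) (iota2 g b) = \<infinity> \<and> Dz g (iota2 g b) (iota1 g a) = \<infinity>"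
  unfolding Dz_def by auto

lemma sig_nn: "a \<in> S2 \<Longrightarrow> b \<in> S2 \<Longrightarrow> 0 \<le> ereal (sigma a b)"
  using sigma_nonneg by simp

lemma Zspace_cases: "q \<in> Zspace g \<Longrightarrow> (\<exists>a\<in>cZ1. q = iota1 g a) \<or> (\<exists>b\<in>Z2. q = iota2 g b)"
proof -
  assume "q \<in> Zspace g"
  then consider a where "a \<in> cZ1" "q = iota1 g a" | b where "b \<in> Z2" "q = iota2 g b"
    | b where "b \<in> S1" "q = iota2 g b" unfolding Zspace_eq using sets_basic by blast
  then show ?thesis
  proof cases
    case 3 then show ?thesis using iota2_S1_eq hS sets_basic by blast
  qed blast+
qed

lemma Dnn: "p \<in> Zspace g \<Longrightarrow> q \<in> Zspace g \<Longrightarrow> 0 \<le> Dz g p q"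
proof -
  assume p: "p \<in> Zspace g" and q: "q \<in> Zspace g"
  have cS: "x \<in> cZ1 \<Longrightarrow> x \<in> S2" "x \<in> cZ2 \<Longrightarrow> x \<in> S2" for x using sets_basic by auto
  have one: "0 \<le> Dz g (iota1 g a) (iota1 g b)" if "a \<in> cZ1" "b \<in> cZ1" for a b
  proof (cases "a \<in> S1 \<and> b \<in> S1")
    case True
    then have "g a \<in> S2" "g b \<in> S2" "a \<in> S2" "b \<in> S2" using gS sets_basic by auto
    then show ?thesis using L2 sigma_nonneg True by auto
  next
    case False then show ?thesis using L1 that sig_nn cS by auto
  qed
  have two: "0 \<le> Dz g (iota2 g a) (iota2 g b)" if "a \<in> cZ2" "b \<in> cZ2" "\<not> (a \<in> S1 \<and> b \<in> S1)" for a b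
    using L3 that sig_nn cS by auto
  have three: "0 \<le> Dz g (iota1 g a) (iota2 g b) \<and> 0 \<le> Dz g (iota2 g b) (iota1 g a)" if "a \<in> cZ1" "b \<in> Z2" for a b
  proof (cases "a \<in> S1")
    case True
    then have "iota1 g a = iota2 g (g a)" "g a \<in> cZ2" using iota1_S1_eq gS sets_basic by auto
    moreover have "b \<notin> S1" "b \<in> cZ2" using that sets_basic by auto
    ultimately show ?thesis using two[of "g a" b] two[of b "g a"] by auto
  next
    case False then have "a \<in> Z1" using that sets_basic by auto
    then show ?thesis using L4 that by auto
  qed
  have Z2n: "b \<in> Z2 \<Longrightarrow> b \<in> cZ2 \<and> b \<notin> S1" for b using sets_basic by auto
  from Zspace_cases[OF p] Zspace_cases[OF q] show ?thesis
  proof (elim disjE bexE)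
    fix a b assume "a \<in> cZ1" "p = iota1 g a" "b \<in> cZ1" "q = iota1 g b" then show ?thesis using one by simp
  next
    fix a b assume "a \<in> cZ1" "p = iota1 g a" "b \<in> Z2" "q = iota2 g b" then show ?thesis using three by simp
  next
    fix a b assume "a \<in> Z2" "p = iota2 g a" "b \<in> cZ1" "q = iota1 g b" then show ?thesis using three by simp
  next
    fix a b assume "a \<in> Z2" "p = iota2 g a" "b \<in> Z2" "q = iota2 g b" then show ?thesis using two Z2n by simp
  qed
qed


lemma cZ1_eq: "Z1 \<union> S1 = cZ1" and cZ2_eq: "Z2 \<union> S1 = cZ2" using sets_basic by auto

lemma in_Zs1: "a \<in> cZ1 \<Longrightarrow> iota1 g a \<in> Zspace g" and in_Zs2: "a \<in> cZ2 \<Longrightarrow> iota2 g a \<in> Zspace g"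
  unfolding Zspace_eq by auto

lemma DE1: "a \<in> S1 \<Longrightarrow> b \<in> S1 \<Longrightarrow> Dz g (iota1 g a) (iota1 g b) \<le> ereal (sigma a b)"
  using L2 by simp

lemma DE2: "a \<in> S1 \<Longrightarrow> b \<in> S1 \<Longrightarrow> Dz g (iota2 g a) (iota2 g b) \<le> ereal (sigma a b)"
  using L2[of "h a" "h b"] hS gh iota2_S1_eq by simp

lemma L1': assumes "a \<in> Z1" "b \<in> Z1 \<union> S1"
  shows "Dz g (iota1 g a) (iota1 g b) = ereal (sigma a b) \<and> Dz g (iota1 g b) (iota1 g a) = ereal (sigma b a)"
proof -
  have "a \<in> cZ1" "a \<notin> S1" "b \<in> cZ1" using assms sets_basic by auto
  then show ?thesis using L1 by auto
qed

lemma L3': assumes "a \<in> Z2" "b \<in> Z2 \<union> S1"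
  shows "Dz g (iota2 g a) (iota2 g b) = ereal (sigma a b) \<and> Dz g (iota2 g b) (iota2 g a) = ereal (sigma b a)"
proof -
  have "a \<in> cZ2" "a \<notin> S1" "b \<in> cZ2" using assms sets_basic by auto
  then show ?thesis using L3 by auto
qed

lemma subs: "Z1 \<subseteq> cZ1" "S1 \<subseteq> cZ1" "Z2 \<subseteq> cZ2" "S1 \<subseteq> cZ2"
  unfolding Z1_def cZ1_def S1_def Z2_def cZ2_def by auto

lemma cases1: "a \<in> cZ1 \<Longrightarrow> a \<in> Z1 \<or> a \<in> S1" and cases2: "a \<in> cZ2 \<Longrightarrow> a \<in> Z2 \<or> a \<in> S1"
  unfolding Z1_def cZ1_def S1_def Z2_def cZ2_def by auto

lemma glue1: "glue (Dz g) (Zspace g) (iota1 g) (iota2 g) Z1 Z2 S1 g"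
proof unfold_locales
  fix q assume q: "q \<in> Zspace g"
  from Zspace_cases[OF q] show "q \<in> iota1 g ` Z1 \<or> q \<in> iota1 g ` S1 \<or> q \<in> iota2 g ` Z2"
  proof (elim disjE bexE)
    fix a assume a: "a \<in> cZ1" "q = iota1 g a"
    from cases1[OF a(1)] show ?thesis using a(2) by blast
  next
    fix b assume "b \<in> Z2" "q = iota2 g b" then show ?thesis by blast
  qed
next
  fix a assume "a \<in> Z1 \<union> S1" then show "iota1 g a \<in> Zspace g" using in_Zs1 subs by blast
next
  fix a assume "a \<in> Z2" then show "iota2 g a \<in> Zspace g" using in_Zs2 subs by blast
next
  show "inj_on (iota1 g) (Z1 \<union> S1)" using inj_on_subset[OF inj1] subs by simp
next
  show "inj_on (iota2 g) Z2" using inj_on_subset[OF inj2 subs(3)] .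
next
  fix a b assume "a \<in> Z1 \<union> S1" "b \<in> Z2" then show "iota1 g a \<noteq> iota2 g b" using d1[of a b] subs by blast
next
  show "Z1 \<inter> S1 = {}" using sets_basic(6) .
next
  fix p q assume "p \<in> Zspace g" "q \<in> Zspace g" then show "0 \<le> Dz g p q" by (rule Dnn)
next
  fix a b assume "a \<in> Z1" "b \<in> Z1 \<union> S1"
  then show "Dz g (iota1 g a) (iota1 g b) = ereal (sigma a b)" using L1' by blast
next
  fix a b assume "a \<in> Z1" "b \<in> Z1 \<union> S1"
  then show "Dz g (iota1 g b) (iota1 g a) = ereal (sigma b a)" using L1' by blast
next
  fix a b assume "a \<in> S1" "b \<in> S1"
  then show "Dz g (iota1 g a) (iota1 g b) \<le> ereal (sigma a b)" by (rule DE1)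
next
  fix a b assume "a \<in> Z2" "b \<in> Z2 \<union> S1"
  then show "Dz g (iota2 g a) (iota2 g b) = ereal (sigma a b)" using L3' by blast
next
  fix a b assume "a \<in> Z2" "b \<in> Z2 \<union> S1"
  then show "Dz g (iota2 g b) (iota2 g a) = ereal (sigma b a)" using L3' by blast
next
  fix a b assume "a \<in> S1" "b \<in> S1"
  then show "Dz g (iota2 g a) (iota2 g b) \<le> ereal (sigma a b)" by (rule DE2)
next
  fix w assume "w \<in> S1" then show "iota2 g (g w) = iota1 g w" using iota1_S1_eq by simp
next
  fix w assume "w \<in> S1" then show "g w \<in> S1" by (rule gS)
next
  fix a b assume "a \<in> Z1" "b \<in> Z2" then show "Dz g (iota1 g a) (iota2 g b) = \<infinity>" using L4 by blast
next
  fix a b assume "a \<in> Z1" "b \<in> Z2" then show "Dz g (iota2 g b) (iota1 g a) = \<infinity>" using L4 by blast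
next
  show "Z1 \<subseteq> S2" using sets_basic(2) .
  show "Z2 \<subseteq> S2" using sets_basic(3) .
  show "S1 \<subseteq> S2" using sets_basic(1) .
  show "S1 \<noteq> {}" by (rule S1_ne)
  show "compact S1" by (rule S1_compact)
  show "continuous_on S1 g" by (rule gc)
qed

lemma glue2: "glue (Dz g) (Zspace g) (iota2 g) (iota1 g) Z2 Z1 S1 h"
proof unfold_locales
  fix q assume q: "q \<in> Zspace g"
  from Zspace_cases[OF q] show "q \<in> iota2 g ` Z2 \<or> q \<in> iota2 g ` S1 \<or> q \<in> iota1 g ` Z1"
  proof (elim disjE bexE)
    fix a assume a: "a \<in> cZ1" "q = iota1 g a"
    from cases1[OF a(1)] show ?thesis
    proof
      assume "a \<in> Z1" then show ?thesis using a(2) by blast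
    next
      assume s: "a \<in> S1"
      then have "q = iota2 g (g a)" "g a \<in> S1" using a(2) iota1_S1_eq gS by auto
      then show ?thesis by blast
    qed
  next
    fix b assume "b \<in> Z2" "q = iota2 g b" then show ?thesis by blast
  qed
next
  fix a assume "a \<in> Z2 \<union> S1" then show "iota2 g a \<in> Zspace g" using in_Zs2 subs by blast
next
  fix a assume "a \<in> Z1" then show "iota1 g a \<in> Zspace g" using in_Zs1 subs by blast
next
  show "inj_on (iota2 g) (Z2 \<union> S1)" using inj_on_subset[OF inj2] subs by simp
next
  show "inj_on (iota1 g) Z1" using inj_on_subset[OF inj1 subs(1)] .
next
  fix a b assume "a \<in> Z2 \<union> S1" "b \<in> Z1" then show "iota2 g a \<noteq> iota1 g b" using d2[of b a] subs by blast
next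
  show "Z2 \<inter> S1 = {}" using sets_basic(7) .
next
  fix p q assume "p \<in> Zspace g" "q \<in> Zspace g" then show "0 \<le> Dz g p q" by (rule Dnn)
next
  fix a b assume "a \<in> Z2" "b \<in> Z2 \<union> S1"
  then show "Dz g (iota2 g a) (iota2 g b) = ereal (sigma a b)" using L3' by blast
next
  fix a b assume "a \<in> Z2" "b \<in> Z2 \<union> S1"
  then show "Dz g (iota2 g b) (iota2 g a) = ereal (sigma b a)" using L3' by blast
next
  fix a b assume "a \<in> S1" "b \<in> S1"
  then show "Dz g (iota2 g a) (iota2 g b) \<le> ereal (sigma a b)" by (rule DE2)
next
  fix a b assume "a \<in> Z1" "b \<in> Z1 \<union> S1"
  then show "Dz g (iota1 g a) (iota1 g b) = ereal (sigma a b)" using L1' by blast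
next
  fix a b assume "a \<in> Z1" "b \<in> Z1 \<union> S1"
  then show "Dz g (iota1 g b) (iota1 g a) = ereal (sigma b a)" using L1' by blast
next
  fix a b assume "a \<in> S1" "b \<in> S1"
  then show "Dz g (iota1 g a) (iota1 g b) \<le> ereal (sigma a b)" by (rule DE1)
next
  fix w assume "w \<in> S1" then show "iota1 g (h w) = iota2 g w" using iota2_S1_eq by simp
next
  fix w assume "w \<in> S1" then show "h w \<in> S1" by (rule hS)
next
  fix a b assume "a \<in> Z2" "b \<in> Z1" then show "Dz g (iota2 g a) (iota1 g b) = \<infinity>" using L4 by blast
next
  fix a b assume "a \<in> Z2" "b \<in> Z1" then show "Dz g (iota1 g b) (iota2 g a) = \<infinity>" using L4 by blast
next
  show "Z2 \<subseteq> S2" using sets_basic(3) .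
  show "Z1 \<subseteq> S2" using sets_basic(2) .
  show "S1 \<subseteq> S2" using sets_basic(1) .
  show "S1 \<noteq> {}" by (rule S1_ne)
  show "compact S1" by (rule S1_compact)
  show "continuous_on S1 h" by (rule hc)
qed

end

theorem lemma3p2:
  fixes g :: "real^3 \<Rightarrow> real^3"
  assumes homeo: "\<exists>h. homeomorphism S1 S1 g h"
    and orient: "orientation_preserving g"
  shows "(\<forall>x\<in>Z1. \<forall>y\<in>Z1.
            dZ g (iota1 g x) (iota1 g y) = ereal (sigma x y) \<or>
            (\<exists>w\<in>S1. \<exists>w'\<in>S1.
               dZ g (iota1 g x) (iota1 g y)
                 = ereal (sigma x w) + dZ g (iota1 g w) (iota1 g w') + ereal (sigma w' y) \<and>
               ereal (sigma x w) + dZ g (iota1 g w) (iota1 g w') + ereal (sigma w' y)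
                 \<le> ereal (sigma x y)))
       \<and> (\<forall>x\<in>Z2. \<forall>y\<in>Z2.
            dZ g (iota2 g x) (iota2 g y) = ereal (sigma x y) \<or>
            (\<exists>w\<in>S1. \<exists>w'\<in>S1.
               dZ g (iota2 g x) (iota2 g y)
                 = ereal (sigma x w) + dZ g (iota2 g w) (iota2 g w') + ereal (sigma w' y) \<and>
               ereal (sigma x w) + dZ g (iota2 g w) (iota2 g w') + ereal (sigma w' y)
                 \<le> ereal (sigma x y)))
       \<and> (\<forall>x\<in>Z1. \<forall>y\<in>Z2. \<exists>w\<in>S1. \<exists>w'\<in>S1.
            dZ g (iota1 g x) (iota2 g y)
              = ereal (sigma x w) + dZ g (iota1 g w) (iota1 g w') + ereal (sigma (g w') y))"
proof -
  obtain h where hh: "homeomorphism S1 S1 g h" using homeo by blast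
  interpret H: hom g h by (rule hom.intro[OF hh])
  interpret G1: glue "Dz g" "Zspace g" "iota1 g" "iota2 g" Z1 Z2 S1 g by (rule H.glue1)
  interpret G2: glue "Dz g" "Zspace g" "iota2 g" "iota1 g" Z2 Z1 S1 h by (rule H.glue2)
  have dZ_eq: "dZ g = dgen (Dz g) (Zspace g)" by (simp add: fun_eq_iff dZ_def dgen_def)
  show ?thesis unfolding dZ_eq using G1.T1 G2.T1 G1.T2 by blast
qed

end
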